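(* Let $X$ be a reflexive complex Banach space, let $(\Omega,\mathcal{A},\mu)$ be a probability space, and let $\xi:\Omega\to X$ be weakly measurable, possessing a weak (Pettis) expectation with $\mathrm{E}\,\xi=\int_\Omega\xi\,d\mu=0$. Suppose that $D=\{f\in X^\ast:\int_\Omega|f(\xi)|^2\,d\mu<+\infty\}$ is dense in $X^\ast$, and define $t(f,g)=\mathrm{E}\big(f(\xi)\overline{g(\xi)}\big)=\int_\Omega f(\xi)\overline{g(\xi)}\,d\mu$ for $f,g\in D$. Then $t$ is a positive, closed, sesquilinear form on $D\times D$.
   Context: $X^\ast$ denotes the space of continuous conjugate-linear functionals on $X$. A positive sesquilinear form $t$ on a subspace $D$ of a normed space $Y$ (here $Y=X^\ast$) is called closed if whenever $f_n\in D$, $f_n\to f$ in $Y$ and $t(f_n-f_m,f_n-f_m)\to0$ as $n,m\to\infty$, then $f\in D$ and $t(f_n-f,f_n-f)\to0$. *)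

theory Defs
  imports "HOL-Analysis.Analysis" "HOL-Probability.Probability"
begin

text \<open>A complex Banach space is modelled as a real Banach space type 'a together
  with a complex scalar multiplication sc extending the real one, compatible with the norm.\<close>
definition complex_scaling :: "(complex \<Rightarrow> 'a::real_normed_vector \<Rightarrow> 'a) \<Rightarrow> bool" where
  "complex_scaling sc \<longleftrightarrow>
     (\<forall>r x. sc (complex_of_real r) x = r *\<^sub>R x) \<and>
     (\<forall>a b x. sc (a * b) x = sc a (sc b x)) \<and>
     (\<forall>a b x. sc (a + b) x = sc a x + sc b x) \<and>
     (\<forall>a x y. sc a (x + y) = sc a x + sc a y) \<and>
     (\<forall>a x. norm (sc a x) = cmod a * norm x)"

definition conj_dual :: "(complex \<Rightarrow> 'a::real_normed_vector \<Rightarrow> 'a) \<Rightarrow> ('a \<Rightarrow> complex) set" where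
  "conj_dual sc = {f. (\<forall>x y. f (x + y) = f x + f y) \<and>
                      (\<forall>c x. f (sc c x) = cnj c * f x) \<and>
                      (\<exists>K. \<forall>x. cmod (f x) \<le> K * norm x)}"

definition dual_norm :: "('a::real_normed_vector \<Rightarrow> complex) \<Rightarrow> real" where
  "dual_norm f = (SUP x\<in>{x. norm x \<le> 1}. cmod (f x))"

text \<open>Reflexivity: every continuous conjugate-linear functional on X^* is of the form
  f \<mapsto> conj (f x), i.e. the canonical embedding X \<rightarrow> X^** is surjective.\<close>
definition reflexive_space :: "(complex \<Rightarrow> 'a::real_normed_vector \<Rightarrow> 'a) \<Rightarrow> bool" where
  "reflexive_space sc \<longleftrightarrow>
     (\<forall>\<Phi> :: ('a \<Rightarrow> complex) \<Rightarrow> complex.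
        (\<forall>f\<in>conj_dual sc. \<forall>g\<in>conj_dual sc. \<Phi> (\<lambda>x. f x + g x) = \<Phi> f + \<Phi> g) \<and>
        (\<forall>c. \<forall>f\<in>conj_dual sc. \<Phi> (\<lambda>x. c * f x) = cnj c * \<Phi> f) \<and>
        (\<exists>K. \<forall>f\<in>conj_dual sc. cmod (\<Phi> f) \<le> K * dual_norm f)
      \<longrightarrow> (\<exists>x. \<forall>f\<in>conj_dual sc. \<Phi> f = cnj (f x)))"

definition sesquilinear_on :: "('b \<Rightarrow> complex) set \<Rightarrow> (('b \<Rightarrow> complex) \<Rightarrow> ('b \<Rightarrow> complex) \<Rightarrow> complex) \<Rightarrow> bool" where
  "sesquilinear_on D t \<longleftrightarrow>
     (\<forall>a b. \<forall>f\<in>D. \<forall>g\<in>D. (\<lambda>x. a * f x + b * g x) \<in> D) \<and>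
     (\<forall>a b. \<forall>f\<in>D. \<forall>g\<in>D. \<forall>h\<in>D. t (\<lambda>x. a * f x + b * g x) h = a * t f h + b * t g h) \<and>
     (\<forall>a b. \<forall>f\<in>D. \<forall>g\<in>D. \<forall>h\<in>D. t h (\<lambda>x. a * f x + b * g x) = cnj a * t h f + cnj b * t h g)"

definition positive_form :: "('b \<Rightarrow> complex) set \<Rightarrow> (('b \<Rightarrow> complex) \<Rightarrow> ('b \<Rightarrow> complex) \<Rightarrow> complex) \<Rightarrow> bool" where
  "positive_form D t \<longleftrightarrow> (\<forall>f\<in>D. Im (t f f) = 0 \<and> 0 \<le> Re (t f f))"

definition closed_form :: "(complex \<Rightarrow> 'a::real_normed_vector \<Rightarrow> 'a) \<Rightarrow> ('a \<Rightarrow> complex) set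
      \<Rightarrow> (('a \<Rightarrow> complex) \<Rightarrow> ('a \<Rightarrow> complex) \<Rightarrow> complex) \<Rightarrow> bool" where
  "closed_form sc D t \<longleftrightarrow>
     (\<forall>F f. (\<forall>n. F n \<in> D) \<and> f \<in> conj_dual sc \<and>
            (\<lambda>n. dual_norm (\<lambda>x. F n x - f x)) \<longlonglongrightarrow> 0 \<and>
            (\<forall>e>0. \<exists>N. \<forall>n\<ge>N. \<forall>m\<ge>N. cmod (t (\<lambda>x. F n x - F m x) (\<lambda>x. F n x - F m x)) < e)
        \<longrightarrow> f \<in> D \<and> (\<lambda>n. t (\<lambda>x. F n x - f x) (\<lambda>x. F n x - f x)) \<longlonglongrightarrow> 0)"

end

theory Submission
  imports Defs
begin

lemma ab_le_sq: "0 \<le> a \<Longrightarrow> 0 \<le> b \<Longrightarrow> (a::real) * b \<le> a\<^sup>2 + b\<^sup>2"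
proof -
  assume "0 \<le> a" "0 \<le> b"
  have "0 \<le> (a - b)\<^sup>2" by simp
  moreover have "0 \<le> a * b" using \<open>0 \<le> a\<close> \<open>0 \<le> b\<close> by simp
  ultimately show ?thesis by (simp add: power2_eq_square algebra_simps)
qed

lemma self_cnj: "z * cnj z = complex_of_real ((cmod z)\<^sup>2)"
  by (rule complex_norm_square[symmetric])

lemma sq_nn_iff:
  fixes u :: "'w \<Rightarrow> complex"
  assumes "u \<in> borel_measurable M"
  shows "(\<integral>\<^sup>+\<omega>. ennreal ((cmod (u \<omega>))\<^sup>2) \<partial>M) < \<infinity> \<longleftrightarrow> integrable M (\<lambda>\<omega>. (cmod (u \<omega>))\<^sup>2)"
proof
  assume "(\<integral>\<^sup>+\<omega>. ennreal ((cmod (u \<omega>))\<^sup>2) \<partial>M) < \<infinity>"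
  then show "integrable M (\<lambda>\<omega>. (cmod (u \<omega>))\<^sup>2)"
    by (intro integrableI_bounded) (use assms in auto)
next
  assume "integrable M (\<lambda>\<omega>. (cmod (u \<omega>))\<^sup>2)"
  then have "(\<integral>\<^sup>+\<omega>. ennreal ((cmod (u \<omega>))\<^sup>2) \<partial>M) = ennreal (\<integral>\<omega>. (cmod (u \<omega>))\<^sup>2 \<partial>M)"
    by (intro nn_integral_eq_integral) auto
  then show "(\<integral>\<^sup>+\<omega>. ennreal ((cmod (u \<omega>))\<^sup>2) \<partial>M) < \<infinity>" by simp
qed

lemma meas_cnj[measurable]: "u \<in> borel_measurable M \<Longrightarrow> (\<lambda>x. cnj (u x)) \<in> borel_measurable M"
  by (rule borel_measurable_continuous_on[where f=cnj]) (auto intro: continuous_intros)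

lemma sq_int_prod:
  fixes u v :: "'w \<Rightarrow> complex"
  assumes "u \<in> borel_measurable M" "v \<in> borel_measurable M"
    "integrable M (\<lambda>\<omega>. (cmod (u \<omega>))\<^sup>2)" "integrable M (\<lambda>\<omega>. (cmod (v \<omega>))\<^sup>2)"
  shows "integrable M (\<lambda>\<omega>. u \<omega> * cnj (v \<omega>))"
proof (rule Bochner_Integration.integrable_bound[of M "\<lambda>\<omega>. (cmod (u \<omega>))\<^sup>2 + (cmod (v \<omega>))\<^sup>2"])
  show "integrable M (\<lambda>\<omega>. (cmod (u \<omega>))\<^sup>2 + (cmod (v \<omega>))\<^sup>2)"
    using assms by auto
  show "(\<lambda>\<omega>. u \<omega> * cnj (v \<omega>)) \<in> borel_measurable M" using assms by auto
  show "AE x in M. norm (u x * cnj (v x)) \<le> norm ((cmod (u x))\<^sup>2 + (cmod (v x))\<^sup>2)"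
    by (intro AE_I2) (simp add: norm_mult ab_le_sq)
qed

lemma sq_int_lin:
  fixes u v :: "'w \<Rightarrow> complex"
  assumes "u \<in> borel_measurable M" "v \<in> borel_measurable M"
    "integrable M (\<lambda>\<omega>. (cmod (u \<omega>))\<^sup>2)" "integrable M (\<lambda>\<omega>. (cmod (v \<omega>))\<^sup>2)"
  shows "integrable M (\<lambda>\<omega>. (cmod (a * u \<omega> + b * v \<omega>))\<^sup>2)"
proof (rule Bochner_Integration.integrable_bound[of M
     "\<lambda>\<omega>. 2 * (cmod a)\<^sup>2 * (cmod (u \<omega>))\<^sup>2 + 2 * (cmod b)\<^sup>2 * (cmod (v \<omega>))\<^sup>2"])
  show "integrable M (\<lambda>\<omega>. 2 * (cmod a)\<^sup>2 * (cmod (u \<omega>))\<^sup>2 + 2 * (cmod b)\<^sup>2 * (cmod (v \<omega>))\<^sup>2)"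
    using assms by auto
  show "(\<lambda>\<omega>. (cmod (a * u \<omega> + b * v \<omega>))\<^sup>2) \<in> borel_measurable M" using assms by auto
  show "AE x in M. norm ((cmod (a * u x + b * v x))\<^sup>2) \<le>
      norm (2 * (cmod a)\<^sup>2 * (cmod (u x))\<^sup>2 + 2 * (cmod b)\<^sup>2 * (cmod (v x))\<^sup>2)"
  proof (intro AE_I2)
    fix x
    define p where "p = cmod a * cmod (u x)"
    define q where "q = cmod b * cmod (v x)"
    have pq: "0 \<le> p" "0 \<le> q" unfolding p_def q_def by auto
    have "cmod (a * u x + b * v x) \<le> p + q"
      unfolding p_def q_def by (metis norm_mult norm_triangle_ineq)
    then have "(cmod (a * u x + b * v x))\<^sup>2 \<le> (p + q)\<^sup>2"
      by (intro power_mono) auto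
    also have "\<dots> \<le> 2 * p\<^sup>2 + 2 * q\<^sup>2"
    proof -
      have "0 \<le> (p - q)\<^sup>2" by simp
      then show ?thesis by (simp add: power2_eq_square algebra_simps)
    qed
    finally show "norm ((cmod (a * u x + b * v x))\<^sup>2) \<le>
      norm (2 * (cmod a)\<^sup>2 * (cmod (u x))\<^sup>2 + 2 * (cmod b)\<^sup>2 * (cmod (v x))\<^sup>2)"
      unfolding p_def q_def by (simp add: power_mult_distrib)
  qed
qed

lemma conj_dual_lin:
  assumes "f \<in> conj_dual sc" "g \<in> conj_dual sc"
  shows "(\<lambda>x. a * f x + b * g x) \<in> conj_dual sc"
proof -
  obtain K1 where K1: "\<And>x. cmod (f x) \<le> K1 * norm x" using assms(1) unfolding conj_dual_def by auto
  obtain K2 where K2: "\<And>x. cmod (g x) \<le> K2 * norm x" using assms(2) unfolding conj_dual_def by auto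
  have "cmod (a * f x + b * g x) \<le> (cmod a * K1 + cmod b * K2) * norm x" for x
  proof -
    have "cmod (a * f x + b * g x) \<le> cmod a * cmod (f x) + cmod b * cmod (g x)"
      by (metis norm_mult norm_triangle_ineq)
    also have "\<dots> \<le> cmod a * (K1 * norm x) + cmod b * (K2 * norm x)"
      by (intro add_mono mult_left_mono K1 K2) auto
    finally show ?thesis by (simp add: algebra_simps)
  qed
  then have "\<exists>K. \<forall>x. cmod (a * f x + b * g x) \<le> K * norm x" by blast
  moreover have "\<forall>x y. a * f (x + y) + b * g (x + y) = (a * f x + b * g x) + (a * f y + b * g y)"
  proof (intro allI)
    fix x y
    have "f (x + y) = f x + f y" "g (x + y) = g x + g y" using assms unfolding conj_dual_def by blast+
    then show "a * f (x + y) + b * g (x + y) = (a * f x + b * g x) + (a * f y + b * g y)"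
      by (simp add: distrib_left)
  qed
  moreover have "\<forall>c x. a * f (sc c x) + b * g (sc c x) = cnj c * (a * f x + b * g x)"
  proof (intro allI)
    fix c x
    have "f (sc c x) = cnj c * f x" "g (sc c x) = cnj c * g x" using assms unfolding conj_dual_def by blast+
    then show "a * f (sc c x) + b * g (sc c x) = cnj c * (a * f x + b * g x)"
      by (simp add: distrib_left)
  qed
  ultimately show ?thesis unfolding conj_dual_def by blast
qed

lemma conj_dual_bound:
  fixes h :: "'a::real_normed_vector \<Rightarrow> complex"
  assumes cplx: "complex_scaling sc" and h: "h \<in> conj_dual sc"
  shows "cmod (h x) \<le> dual_norm h * norm x"
proof (cases "x = 0")
  case True
  have "h 0 = h 0 + h 0" using h unfolding conj_dual_def by (metis (mono_tags, lifting) add_0 mem_Collect_eq)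
  then show ?thesis using True by simp
next
  case False
  obtain K where K: "\<And>x. cmod (h x) \<le> K * norm x" using h unfolding conj_dual_def by auto
  have hom: "\<And>c x. h (sc c x) = cnj c * h x" using h unfolding conj_dual_def by auto
  have scr: "\<And>r x. sc (complex_of_real r) x = r *\<^sub>R x" using cplx unfolding complex_scaling_def by auto
  have bdd: "bdd_above ((\<lambda>x. cmod (h x)) ` {x::'a. norm x \<le> 1})"
  proof (rule bdd_aboveI2)
    fix y :: 'a assume "y \<in> {x. norm x \<le> (1::real)}"
    then have ny: "norm y \<le> 1" by simp
    have "cmod (h y) \<le> K * norm y" using K by simp
    also have "\<dots> \<le> max K 0 * norm y" by (intro mult_right_mono) auto
    also have "\<dots> \<le> max K 0" using ny by (intro mult_left_le) auto
    finally show "cmod (h y) \<le> max K 0" .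
  qed
  define y where "y = (1 / norm x) *\<^sub>R x"
  have ny: "norm y \<le> 1" unfolding y_def using False by simp
  have "y = sc (complex_of_real (1 / norm x)) x" unfolding y_def by (simp only: scr)
  then have "h y = complex_of_real (1 / norm x) * h x"
    using hom[of "complex_of_real (1 / norm x)" x] by simp
  then have "cmod (h y) = cmod (h x) / norm x" by (simp add: norm_divide)
  moreover have "cmod (h y) \<le> dual_norm h"
    unfolding dual_norm_def using ny bdd by (intro cSUP_upper) auto
  ultimately show ?thesis using False by (simp add: divide_le_eq)
qed

lemma t_self:
  assumes "t = (\<lambda>f g. \<integral>\<omega>. f (\<xi> \<omega>) * cnj (g (\<xi> \<omega>)) \<partial>M)"
  shows "t h h = complex_of_real (\<integral>\<omega>. (cmod (h (\<xi> \<omega>)))\<^sup>2 \<partial>M)"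
  unfolding assms self_cnj by (rule integral_complex_of_real)

theorem theorem7:
  fixes sc :: "complex \<Rightarrow> 'a::banach \<Rightarrow> 'a"
    and M :: "'w measure"
    and \<xi> :: "'w \<Rightarrow> 'a"
    and D :: "('a \<Rightarrow> complex) set"
    and t :: "('a \<Rightarrow> complex) \<Rightarrow> ('a \<Rightarrow> complex) \<Rightarrow> complex"
  assumes cplx: "complex_scaling sc"
    and refl: "reflexive_space sc"
    and prob: "prob_space M"
    and weakly_meas: "\<forall>f\<in>conj_dual sc. (\<lambda>\<omega>. f (\<xi> \<omega>)) \<in> borel_measurable M"
    and pettis_zero: "\<forall>f\<in>conj_dual sc. integrable M (\<lambda>\<omega>. f (\<xi> \<omega>)) \<and>
                        (\<integral>\<omega>. f (\<xi> \<omega>) \<partial>M) = 0"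
    and D_def: "D = {f\<in>conj_dual sc. (\<integral>\<^sup>+\<omega>. ennreal ((cmod (f (\<xi> \<omega>)))\<^sup>2) \<partial>M) < \<infinity>}"
    and dense: "\<forall>f\<in>conj_dual sc. \<forall>e>0. \<exists>g\<in>D. dual_norm (\<lambda>x. f x - g x) < e"
    and t_def: "t = (\<lambda>f g. \<integral>\<omega>. f (\<xi> \<omega>) * cnj (g (\<xi> \<omega>)) \<partial>M)"
  shows "positive_form D t \<and> closed_form sc D t \<and> sesquilinear_on D t"
proof -
  have meas: "\<And>f. f \<in> conj_dual sc \<Longrightarrow> (\<lambda>\<omega>. f (\<xi> \<omega>)) \<in> borel_measurable M"
    using weakly_meas by blast
  have D': "D = {f\<in>conj_dual sc. integrable M (\<lambda>\<omega>. (cmod (f (\<xi> \<omega>)))\<^sup>2)}"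
    unfolding D_def using sq_nn_iff[OF meas] by blast
  have tself: "\<And>h. t h h = complex_of_real (\<integral>\<omega>. (cmod (h (\<xi> \<omega>)))\<^sup>2 \<partial>M)"
    using t_self[OF t_def] .
  have Dlin: "(\<lambda>x. a * f x + b * g x) \<in> D" if "f \<in> D" "g \<in> D" for a b f g
  proof -
    have "integrable M (\<lambda>\<omega>. (cmod (a * f (\<xi> \<omega>) + b * g (\<xi> \<omega>)))\<^sup>2)"
      using that unfolding D' by (intro sq_int_lin meas) auto
    then show ?thesis using that conj_dual_lin unfolding D' by auto
  qed
  have tint: "integrable M (\<lambda>\<omega>. f (\<xi> \<omega>) * cnj (g (\<xi> \<omega>)))" if "f \<in> D" "g \<in> D" for f g
    using that unfolding D' by (intro sq_int_prod meas) auto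
  have pos: "positive_form D t"
    unfolding positive_form_def tself by auto
  have ses: "sesquilinear_on D t"
    unfolding sesquilinear_on_def
  proof (intro conjI ballI allI)
    fix a b f g h assume fgh: "f \<in> D" "g \<in> D" "h \<in> D"
    show "t (\<lambda>x. a * f x + b * g x) h = a * t f h + b * t g h"
      unfolding t_def using tint[OF fgh(1,3)] tint[OF fgh(2,3)]
      by (simp add: distrib_right mult.assoc)
    show "t h (\<lambda>x. a * f x + b * g x) = cnj a * t h f + cnj b * t h g"
      unfolding t_def using tint[OF fgh(3,1)] tint[OF fgh(3,2)]
      by (simp add: distrib_left mult.left_commute)
  qed (use Dlin in auto)
  have clo: "closed_form sc D t"
    unfolding closed_form_def
  proof (intro allI impI)
    fix F f
    assume asm: "(\<forall>n. F n \<in> D) \<and> f \<in> conj_dual sc \<and>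
            (\<lambda>n. dual_norm (\<lambda>x. F n x - f x)) \<longlonglongrightarrow> 0 \<and>
            (\<forall>e>0. \<exists>N. \<forall>n\<ge>N. \<forall>m\<ge>N. cmod (t (\<lambda>x. F n x - F m x) (\<lambda>x. F n x - F m x)) < e)"
    then have FD: "\<And>n. F n \<in> D" and fc: "f \<in> conj_dual sc"
      and dn: "(\<lambda>n. dual_norm (\<lambda>x. F n x - f x)) \<longlonglongrightarrow> 0"
      and cau: "\<And>e. e > 0 \<Longrightarrow> \<exists>N. \<forall>n\<ge>N. \<forall>m\<ge>N. cmod (t (\<lambda>x. F n x - F m x) (\<lambda>x. F n x - F m x)) < e"
      by blast+
    have Fc: "F n \<in> conj_dual sc" for n using FD D' by auto
    have Fi: "integrable M (\<lambda>\<omega>. (cmod (F n (\<xi> \<omega>)))\<^sup>2)" for n using FD D' by auto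
    define u where "u n \<omega> = F n (\<xi> \<omega>)" for n \<omega>
    define v where "v \<omega> = f (\<xi> \<omega>)" for \<omega>
    have um[measurable]: "u n \<in> borel_measurable M" for n unfolding u_def using meas[OF Fc] .
    have vm[measurable]: "v \<in> borel_measurable M" unfolding v_def using meas[OF fc] .
    have ui: "integrable M (\<lambda>\<omega>. (cmod (u n \<omega>))\<^sup>2)" for n unfolding u_def by (rule Fi)
    have pw: "(\<lambda>m. u m \<omega>) \<longlonglongrightarrow> v \<omega>" for \<omega>
    proof -
      have diff: "(\<lambda>x. F m x - f x) \<in> conj_dual sc" for m
        using conj_dual_lin[OF Fc fc, of 1 m "-1"] by simp
      have "(\<lambda>m. u m \<omega> - v \<omega>) \<longlonglongrightarrow> 0"
      proof (rule Lim_null_comparison)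
        show "\<forall>\<^sub>F m in sequentially. norm (u m \<omega> - v \<omega>) \<le> dual_norm (\<lambda>x. F m x - f x) * norm (\<xi> \<omega>)"
          unfolding u_def v_def using conj_dual_bound[OF cplx diff] by simp
        show "(\<lambda>m. dual_norm (\<lambda>x. F m x - f x) * norm (\<xi> \<omega>)) \<longlonglongrightarrow> 0"
          using tendsto_mult[OF dn tendsto_const[of "norm (\<xi> \<omega>)"]] by simp
      qed
      then show ?thesis by (rule LIM_zero_cancel)
    qed
    have tdiff: "t (\<lambda>x. F n x - F m x) (\<lambda>x. F n x - F m x) = complex_of_real (\<integral>\<omega>. (cmod (u n \<omega> - u m \<omega>))\<^sup>2 \<partial>M)" for n m
      unfolding tself u_def ..
    have tdiff2: "t (\<lambda>x. F n x - f x) (\<lambda>x. F n x - f x) = complex_of_real (\<integral>\<omega>. (cmod (u n \<omega> - v \<omega>))\<^sup>2 \<partial>M)" for n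
      unfolding tself u_def v_def ..
    have iuu: "integrable M (\<lambda>\<omega>. (cmod (u n \<omega> - u m \<omega>))\<^sup>2)" for n m
      using sq_int_lin[OF um[of n] um[of m] ui[of n] ui[of m], of 1 "-1"] by simp
    have key: "\<exists>N. \<forall>n\<ge>N. (\<integral>\<^sup>+\<omega>. ennreal ((cmod (u n \<omega> - v \<omega>))\<^sup>2) \<partial>M) \<le> ennreal e" if e_pos: "e > 0" for e
    proof -
      obtain N where N: "\<forall>n\<ge>N. \<forall>m\<ge>N. cmod (t (\<lambda>x. F n x - F m x) (\<lambda>x. F n x - F m x)) < e"
        using cau[OF e_pos] by blast
      have b: "(\<integral>\<^sup>+\<omega>. ennreal ((cmod (u n \<omega> - u m \<omega>))\<^sup>2) \<partial>M) \<le> ennreal e" if "n \<ge> N" "m \<ge> N" for n m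
      proof -
        have "cmod (t (\<lambda>x. F n x - F m x) (\<lambda>x. F n x - F m x)) < e" using N that by blast
        then have "(\<integral>\<omega>. (cmod (u n \<omega> - u m \<omega>))\<^sup>2 \<partial>M) < e" unfolding tdiff by (simp add: abs_less_iff)
        moreover have "(\<integral>\<^sup>+\<omega>. ennreal ((cmod (u n \<omega> - u m \<omega>))\<^sup>2) \<partial>M) = ennreal (\<integral>\<omega>. (cmod (u n \<omega> - u m \<omega>))\<^sup>2 \<partial>M)"
          by (rule nn_integral_eq_integral[OF iuu]) auto
        ultimately show ?thesis by (simp add: ennreal_leI)
      qed
      show ?thesis
      proof (intro exI allI impI)
        fix n assume "N \<le> n"
        have "(\<integral>\<^sup>+\<omega>. ennreal ((cmod (u n \<omega> - v \<omega>))\<^sup>2) \<partial>M) =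
              (\<integral>\<^sup>+\<omega>. liminf (\<lambda>m. ennreal ((cmod (u n \<omega> - u m \<omega>))\<^sup>2)) \<partial>M)"
        proof (rule nn_integral_cong)
          fix \<omega>
          have "(\<lambda>m. ennreal ((cmod (u n \<omega> - u m \<omega>))\<^sup>2)) \<longlonglongrightarrow> ennreal ((cmod (u n \<omega> - v \<omega>))\<^sup>2)"
            by (intro tendsto_ennrealI tendsto_intros pw)
          then show "ennreal ((cmod (u n \<omega> - v \<omega>))\<^sup>2) = liminf (\<lambda>m. ennreal ((cmod (u n \<omega> - u m \<omega>))\<^sup>2))"
            by (metis lim_imp_Liminf sequentially_bot)
        qed
        also have "\<dots> \<le> liminf (\<lambda>m. \<integral>\<^sup>+\<omega>. ennreal ((cmod (u n \<omega> - u m \<omega>))\<^sup>2) \<partial>M)"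
          by (rule nn_integral_liminf) measurable
        also have "\<dots> \<le> limsup (\<lambda>m. \<integral>\<^sup>+\<omega>. ennreal ((cmod (u n \<omega> - u m \<omega>))\<^sup>2) \<partial>M)"
          by (rule Liminf_le_Limsup) simp
        also have "\<dots> \<le> ennreal e"
          by (rule Limsup_bounded) (use b \<open>N \<le> n\<close> in \<open>auto simp: eventually_sequentially\<close>)
        finally show "(\<integral>\<^sup>+\<omega>. ennreal ((cmod (u n \<omega> - v \<omega>))\<^sup>2) \<partial>M) \<le> ennreal e" .
      qed
    qed
    have vint: "integrable M (\<lambda>\<omega>. (cmod (u n \<omega> - v \<omega>))\<^sup>2)"
      if "(\<integral>\<^sup>+\<omega>. ennreal ((cmod (u n \<omega> - v \<omega>))\<^sup>2) \<partial>M) \<le> ennreal e" for n e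
    proof -
      have "(\<integral>\<^sup>+\<omega>. ennreal ((cmod (u n \<omega> - v \<omega>))\<^sup>2) \<partial>M) < \<infinity>"
        using that by (simp add: le_less_trans)
      then show ?thesis using sq_nn_iff[of "\<lambda>\<omega>. u n \<omega> - v \<omega>" M] by simp
    qed
    have fD: "f \<in> D"
    proof -
      obtain N where "\<forall>n\<ge>N. (\<integral>\<^sup>+\<omega>. ennreal ((cmod (u n \<omega> - v \<omega>))\<^sup>2) \<partial>M) \<le> ennreal 1"
        using key[of 1] by auto
      then have i: "integrable M (\<lambda>\<omega>. (cmod (u N \<omega> - v \<omega>))\<^sup>2)" using vint by blast
      have "integrable M (\<lambda>\<omega>. (cmod (1 * u N \<omega> + (-1) * (u N \<omega> - v \<omega>)))\<^sup>2)"
        by (rule sq_int_lin[OF um[of N] _ ui[of N] i]) measurable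
      then have "integrable M (\<lambda>\<omega>. (cmod (v \<omega>))\<^sup>2)" by simp
      then show ?thesis unfolding D' v_def using fc by simp
    qed
    have conv: "(\<lambda>n. t (\<lambda>x. F n x - f x) (\<lambda>x. F n x - f x)) \<longlonglongrightarrow> 0"
    proof (rule LIMSEQ_I)
      fix r :: real assume "0 < r"
      then obtain N where N: "\<forall>n\<ge>N. (\<integral>\<^sup>+\<omega>. ennreal ((cmod (u n \<omega> - v \<omega>))\<^sup>2) \<partial>M) \<le> ennreal (r/2)"
        using key[of "r/2"] by auto
      show "\<exists>no. \<forall>n\<ge>no. norm (t (\<lambda>x. F n x - f x) (\<lambda>x. F n x - f x) - 0) < r"
      proof (intro exI allI impI)
        fix n assume "N \<le> n"
        then have le: "(\<integral>\<^sup>+\<omega>. ennreal ((cmod (u n \<omega> - v \<omega>))\<^sup>2) \<partial>M) \<le> ennreal (r/2)" using N by blast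
        have "(\<integral>\<^sup>+\<omega>. ennreal ((cmod (u n \<omega> - v \<omega>))\<^sup>2) \<partial>M) = ennreal (\<integral>\<omega>. (cmod (u n \<omega> - v \<omega>))\<^sup>2 \<partial>M)"
          by (rule nn_integral_eq_integral[OF vint[OF le]]) auto
        with le have "(\<integral>\<omega>. (cmod (u n \<omega> - v \<omega>))\<^sup>2 \<partial>M) \<le> r/2"
          using \<open>0 < r\<close> by (simp add: ennreal_le_iff)
        moreover have "0 \<le> (\<integral>\<omega>. (cmod (u n \<omega> - v \<omega>))\<^sup>2 \<partial>M)" by simp
        ultimately show "norm (t (\<lambda>x. F n x - f x) (\<lambda>x. F n x - f x) - 0) < r"
          unfolding tdiff2 using \<open>0 < r\<close> by simp
      qed
    qed
    show "f \<in> D \<and> (\<lambda>n. t (\<lambda>x. F n x - f x) (\<lambda>x. F n x - f x)) \<longlonglongrightarrow> 0"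
      using fD conv by blast
  qed
  show ?thesis using pos clo ses by blast
qed

end
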